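(* Let $(V,\le,\preccurlyeq)$ be a mixed lattice vector space equipped with a vector topology $\tau$. The following are equivalent: (a) $(x,y)\mapsto x\curlyvee y$ from $V\times V$ to $V$ is uniformly continuous; (b) $(x,y)\mapsto x\curlywedge y$ from $V\times V$ to $V$ is uniformly continuous; (c) $x\mapsto {}^ux$ is uniformly continuous; (d) $x\mapsto {}^lx$ is uniformly continuous; (e) $x\mapsto |x|_{lu}$ is uniformly continuous; (f) $x\mapsto |x|_{ul}$ is uniformly continuous; (g) $x\mapsto x^l$ is uniformly continuous; (h) $x\mapsto x^u$ is uniformly continuous.
   Context: A mixed lattice vector space $(V,\le,\preccurlyeq)$ is a real vector space $V$ with two partial orderings $\le$ (initial order) and $\preccurlyeq$ (specific order), each making $V$ a partially ordered vector space, with positive cones $V_p=\{x:0\le x\}$, $V_{sp}=\{x:0\preccurlyeq x\}$, such that: (1) for all $x,y$ the elements $x\curlyvee y=\min\{w: w\succcurlyeq x,\ w\ge y\}$ and $x\curlywedge y=\max\{w: w\preccurlyeq x,\ w\le y\}$ exist (min/max with respect to $\le$); (2) $x\preccurlyeq y$ implies $x\le y$; (3) $x\curlyvee y, x\curlywedge y\in V_{sp}$ whenever $x,y\in V_{sp}$. Notation: $x^u=0\curlyvee x$, $x^l=0\curlyvee(-x)$, ${}^ux=x\curlyvee 0$, ${}^lx=(-x)\curlyvee 0$, $|x|_{ul}=x\curlyvee(-x)$, $|x|_{lu}=(-x)\curlyvee x$. A map $f:V\to V$ is uniformly continuous if for every neighborhood $W$ of $0$ there is a neighborhood $U$ of $0$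 with $x-y\in U\Rightarrow f(x)-f(y)\in W$; a map $g:V\times V\to V$ is uniformly continuous if for every neighborhood $W$ of $0$ there is a neighborhood $U$ of $0$ such that $x-x'\in U$ and $y-y'\in U$ imply $g(x,y)-g(x',y')\in W$. *)

theory Defs
  imports "HOL-Analysis.Analysis"
begin

definition po_vector_space :: "('a::real_vector \<Rightarrow> 'a \<Rightarrow> bool) \<Rightarrow> bool" where
  "po_vector_space le \<longleftrightarrow>
     (\<forall>x. le x x) \<and>
     (\<forall>x y. le x y \<and> le y x \<longrightarrow> x = y) \<and>
     (\<forall>x y z. le x y \<and> le y z \<longrightarrow> le x z) \<and>
     (\<forall>x y z. le x y \<longrightarrow> le (x + z) (y + z)) \<and>
     (\<forall>x y (c::real). le x y \<and> 0 \<le> c \<longrightarrow> le (c *\<^sub>R x) (c *\<^sub>R y))"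

definition msup :: "('a \<Rightarrow> 'a \<Rightarrow> bool) \<Rightarrow> ('a \<Rightarrow> 'a \<Rightarrow> bool) \<Rightarrow> 'a \<Rightarrow> 'a \<Rightarrow> 'a" where
  "msup le sle x y = (THE w. sle x w \<and> le y w \<and> (\<forall>v. sle x v \<and> le y v \<longrightarrow> le w v))"

definition minf :: "('a \<Rightarrow> 'a \<Rightarrow> bool) \<Rightarrow> ('a \<Rightarrow> 'a \<Rightarrow> bool) \<Rightarrow> 'a \<Rightarrow> 'a \<Rightarrow> 'a" where
  "minf le sle x y = (THE w. sle w x \<and> le w y \<and> (\<forall>v. sle v x \<and> le v y \<longrightarrow> le v w))"

definition mixed_lattice_vector_space ::
  "('a::real_vector \<Rightarrow> 'a \<Rightarrow> bool) \<Rightarrow> ('a \<Rightarrow> 'a \<Rightarrow> bool) \<Rightarrow> bool" where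
  "mixed_lattice_vector_space le sle \<longleftrightarrow>
     po_vector_space le \<and> po_vector_space sle \<and>
     (\<forall>x y. \<exists>w. sle x w \<and> le y w \<and> (\<forall>v. sle x v \<and> le y v \<longrightarrow> le w v)) \<and>
     (\<forall>x y. \<exists>w. sle w x \<and> le w y \<and> (\<forall>v. sle v x \<and> le v y \<longrightarrow> le v w)) \<and>
     (\<forall>x y. sle x y \<longrightarrow> le x y) \<and>
     (\<forall>x y. sle 0 x \<and> sle 0 y \<longrightarrow> sle 0 (msup le sle x y) \<and> sle 0 (minf le sle x y))"

definition vector_topology :: "'a::real_vector topology \<Rightarrow> bool" where
  "vector_topology T \<longleftrightarrow>
     topspace T = UNIV \<and>
     continuous_map (prod_topology T T) T (\<lambda>(x, y). x + y) \<and>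
     continuous_map (prod_topology euclideanreal T) T (\<lambda>(c, x). c *\<^sub>R x)"

definition nhd0 :: "'a::real_vector topology \<Rightarrow> 'a set \<Rightarrow> bool" where
  "nhd0 T W \<longleftrightarrow> (\<exists>U. openin T U \<and> 0 \<in> U \<and> U \<subseteq> W)"

definition unif_cont1 :: "'a::real_vector topology \<Rightarrow> ('a \<Rightarrow> 'a) \<Rightarrow> bool" where
  "unif_cont1 T f \<longleftrightarrow>
     (\<forall>W. nhd0 T W \<longrightarrow> (\<exists>U. nhd0 T U \<and> (\<forall>x y. x - y \<in> U \<longrightarrow> f x - f y \<in> W)))"

definition unif_cont2 :: "'a::real_vector topology \<Rightarrow> ('a \<Rightarrow> 'a \<Rightarrow> 'a) \<Rightarrow> bool" where
  "unif_cont2 T g \<longleftrightarrow>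
     (\<forall>W. nhd0 T W \<longrightarrow> (\<exists>U. nhd0 T U \<and>
        (\<forall>x y x' y'. x - x' \<in> U \<and> y - y' \<in> U \<longrightarrow> g x y - g x' y' \<in> W)))"

end

theory Submission
  imports Defs
begin


lemma nhd0_scale:
  assumes VT: "vector_topology T" and W: "nhd0 T W"
  shows "nhd0 T {x. c *\<^sub>R x \<in> W}"
proof -
  obtain U where U: "openin T U" "0 \<in> U" "U \<subseteq> W" using W by (auto simp: nhd0_def)
  have top: "topspace T = UNIV" using VT by (simp add: vector_topology_def)
  have cm: "continuous_map (prod_topology euclideanreal T) T (\<lambda>(c, x). c *\<^sub>R x)"
    using VT by (simp add: vector_topology_def)
  have "continuous_map T (prod_topology euclideanreal T) (\<lambda>x. (c, x))"
    by (simp add: continuous_map_paired)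
  then have "continuous_map T T ((\<lambda>(c, x). c *\<^sub>R x) \<circ> (\<lambda>x. (c, x)))"
    using cm continuous_map_compose by blast
  then have "continuous_map T T (\<lambda>x. c *\<^sub>R x)" by (simp add: o_def)
  then have "openin T {x \<in> topspace T. c *\<^sub>R x \<in> U}"
    using U(1) openin_continuous_map_preimage by blast
  then have "openin T {x. c *\<^sub>R x \<in> U}" using top by simp
  then show ?thesis unfolding nhd0_def using U by (intro exI[of _ "{x. c *\<^sub>R x \<in> U}"]) auto
qed

lemma nhd0_int:
  "nhd0 T A \<Longrightarrow> nhd0 T B \<Longrightarrow> nhd0 T (A \<inter> B)"
  unfolding nhd0_def by (metis Int_mono Int_iff openin_Int)

lemma nhd0_zero: "nhd0 T W \<Longrightarrow> 0 \<in> W"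
  unfolding nhd0_def by auto

lemma nhd0_add:
  assumes VT: "vector_topology T" and W: "nhd0 T W"
  shows "\<exists>V. nhd0 T V \<and> (\<forall>a b. a \<in> V \<and> b \<in> V \<longrightarrow> a + b \<in> W)"
proof -
  obtain U where U: "openin T U" "0 \<in> U" "U \<subseteq> W" using W by (auto simp: nhd0_def)
  have top: "topspace T = UNIV" using VT by (simp add: vector_topology_def)
  have cm: "continuous_map (prod_topology T T) T (\<lambda>(x, y). x + y)"
    using VT by (simp add: vector_topology_def)
  have "openin (prod_topology T T) {p \<in> topspace (prod_topology T T). (\<lambda>(x, y). x + y) p \<in> U}"
    using cm U(1) openin_continuous_map_preimage by blast
  then have o: "openin (prod_topology T T) {p. fst p + snd p \<in> U}"
    using top by (simp add: case_prod_beta)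
  have "(0,0) \<in> {p. fst p + snd p \<in> U}" using U by simp
  then obtain A B where AB: "openin T A" "openin T B" "0 \<in> A" "0 \<in> B"
     "A \<times> B \<subseteq> {p. fst p + snd p \<in> U}"
    using o unfolding openin_prod_topology_alt by blast
  show ?thesis
  proof (intro exI conjI allI impI)
    show "nhd0 T (A \<inter> B)" unfolding nhd0_def using AB by (intro exI[of _ "A \<inter> B"]) auto
    fix a b assume "a \<in> A \<inter> B \<and> b \<in> A \<inter> B"
    then have "(a,b) \<in> A \<times> B" by auto
    then have "(a,b) \<in> {p. fst p + snd p \<in> U}" using AB(5) by (rule subsetD[rotated])
    then show "a + b \<in> W" using U(3) by auto
  qed
qed

lemma nhd0_addsub:
  assumes VT: "vector_topology T" and W: "nhd0 T W"
  shows "\<exists>V. nhd0 T V \<and> (\<forall>a b. a \<in> V \<and> b \<in> V \<longrightarrow> a + b \<in> W \<and> a - b \<in> W)"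
proof -
  obtain V where V: "nhd0 T V" "\<forall>a b. a \<in> V \<and> b \<in> V \<longrightarrow> a + b \<in> W"
    using nhd0_add[OF VT W] by blast
  have "nhd0 T (V \<inter> {x. (-1) *\<^sub>R x \<in> V})" using nhd0_int[OF V(1) nhd0_scale[OF VT V(1)]] .
  moreover have "\<forall>a b. a \<in> V \<inter> {x. (-1) *\<^sub>R x \<in> V} \<and> b \<in> V \<inter> {x. (-1) *\<^sub>R x \<in> V}
     \<longrightarrow> a + b \<in> W \<and> a - b \<in> W"
    using V(2) by (metis (no_types, lifting) IntD1 IntD2 mem_Collect_eq scaleR_minus1_left diff_conv_add_uminus)
  ultimately show ?thesis by blast
qed

lemma uc1_transfer:
  assumes VT: "vector_topology T" and g: "unif_cont1 T g"
    and f: "\<And>z. f z = g (c *\<^sub>R z) + d *\<^sub>R z"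
  shows "unif_cont1 T f"
  unfolding unif_cont1_def
proof (intro allI impI)
  fix W assume W: "nhd0 T W"
  obtain W1 where W1: "nhd0 T W1" "\<forall>a b. a \<in> W1 \<and> b \<in> W1 \<longrightarrow> a + b \<in> W \<and> a - b \<in> W"
    using nhd0_addsub[OF VT W] by blast
  obtain U1 where U1: "nhd0 T U1" "\<forall>x y. x - y \<in> U1 \<longrightarrow> g x - g y \<in> W1"
    using g W1(1) unfolding unif_cont1_def by blast
  let ?U = "{z. c *\<^sub>R z \<in> U1} \<inter> {z. d *\<^sub>R z \<in> W1}"
  show "\<exists>U. nhd0 T U \<and> (\<forall>x y. x - y \<in> U \<longrightarrow> f x - f y \<in> W)"
  proof (intro exI conjI allI impI)
    show "nhd0 T ?U" by (intro nhd0_int nhd0_scale VT U1(1) W1(1))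
    fix x y assume "x - y \<in> ?U"
    then have a: "c *\<^sub>R x - c *\<^sub>R y \<in> U1" and b: "d *\<^sub>R x - d *\<^sub>R y \<in> W1"
      by (auto simp: scaleR_diff_right)
    have "f x - f y = (g (c *\<^sub>R x) - g (c *\<^sub>R y)) + (d *\<^sub>R x - d *\<^sub>R y)"
      by (simp add: f algebra_simps)
    then show "f x - f y \<in> W" using W1(2) U1(2) a b by auto
  qed
qed

lemma uc2_to_uc1:
  assumes VT: "vector_topology T" and g: "unif_cont2 T g"
    and f: "\<And>z. f z = g (a *\<^sub>R z) (b *\<^sub>R z)"
  shows "unif_cont1 T f"
  unfolding unif_cont1_def
proof (intro allI impI)
  fix W assume W: "nhd0 T W"
  obtain U1 where U1: "nhd0 T U1" "\<forall>x y x' y'. x - x' \<in> U1 \<and> y - y' \<in> U1 \<longrightarrow> g x y - g x' y' \<in> W"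
    using g W unfolding unif_cont2_def by blast
  let ?U = "{z. a *\<^sub>R z \<in> U1} \<inter> {z. b *\<^sub>R z \<in> U1}"
  show "\<exists>U. nhd0 T U \<and> (\<forall>x y. x - y \<in> U \<longrightarrow> f x - f y \<in> W)"
  proof (intro exI conjI allI impI)
    show "nhd0 T ?U" by (intro nhd0_int nhd0_scale VT U1(1))
    fix x y assume "x - y \<in> ?U"
    then have "a *\<^sub>R x - a *\<^sub>R y \<in> U1" "b *\<^sub>R x - b *\<^sub>R y \<in> U1"
      by (auto simp: scaleR_diff_right)
    then show "f x - f y \<in> W" using U1(2) by (simp add: f)
  qed
qed

lemma uc1_to_uc2:
  assumes VT: "vector_topology T" and h: "unif_cont1 T h"
    and g: "\<And>x y. g x y = h (x - y) + y"
  shows "unif_cont2 T g"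
  unfolding unif_cont2_def
proof (intro allI impI)
  fix W assume W: "nhd0 T W"
  obtain W1 where W1: "nhd0 T W1" "\<forall>a b. a \<in> W1 \<and> b \<in> W1 \<longrightarrow> a + b \<in> W \<and> a - b \<in> W"
    using nhd0_addsub[OF VT W] by blast
  obtain U1 where U1: "nhd0 T U1" "\<forall>x y. x - y \<in> U1 \<longrightarrow> h x - h y \<in> W1"
    using h W1(1) unfolding unif_cont1_def by blast
  obtain U2 where U2: "nhd0 T U2" "\<forall>a b. a \<in> U2 \<and> b \<in> U2 \<longrightarrow> a + b \<in> U1 \<and> a - b \<in> U1"
    using nhd0_addsub[OF VT U1(1)] by blast
  show "\<exists>U. nhd0 T U \<and> (\<forall>x y x' y'. x - x' \<in> U \<and> y - y' \<in> U \<longrightarrow> g x y - g x' y' \<in> W)"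
  proof (intro exI conjI allI impI)
    show "nhd0 T (U2 \<inter> W1)" by (intro nhd0_int U2(1) W1(1))
    fix x y x' y' assume A: "x - x' \<in> U2 \<inter> W1 \<and> y - y' \<in> U2 \<inter> W1"
    have "(x - y) - (x' - y') = (x - x') - (y - y')" by (simp add: algebra_simps)
    moreover have "(x - x') - (y - y') \<in> U1" using A U2(2) by blast
    ultimately have "(x - y) - (x' - y') \<in> U1" by (metis diff_diff_eq2 diff_add_eq diff_diff_eq add.commute)
    then have "h (x - y) - h (x' - y') \<in> W1" using U1(2) by blast
    moreover have "g x y - g x' y' = (h (x - y) - h (x' - y')) + (y - y')"
      by (simp add: g algebra_simps)
    ultimately show "g x y - g x' y' \<in> W" using W1(2) A by auto
  qed
qed

lemma uc2_neg:
  assumes VT: "vector_topology T" and g: "unif_cont2 T g"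
    and h: "\<And>x y. h x y = - g (- x) (- y)"
  shows "unif_cont2 T h"
  unfolding unif_cont2_def
proof (intro allI impI)
  fix W assume W: "nhd0 T W"
  have W': "nhd0 T {z. (-1) *\<^sub>R z \<in> W}" by (rule nhd0_scale[OF VT W])
  obtain U1 where U1: "nhd0 T U1" "\<forall>x y x' y'. x - x' \<in> U1 \<and> y - y' \<in> U1 \<longrightarrow> g x y - g x' y' \<in> {z. (-1) *\<^sub>R z \<in> W}"
    using g W' unfolding unif_cont2_def by blast
  show "\<exists>U. nhd0 T U \<and> (\<forall>x y x' y'. x - x' \<in> U \<and> y - y' \<in> U \<longrightarrow> h x y - h x' y' \<in> W)"
  proof (intro exI conjI allI impI)
    show "nhd0 T {z. (-1) *\<^sub>R z \<in> U1}" by (rule nhd0_scale[OF VT U1(1)])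
    fix x y x' y' assume "x - x' \<in> {z. (-1) *\<^sub>R z \<in> U1} \<and> y - y' \<in> {z. (-1) *\<^sub>R z \<in> U1}"
    then have "(-x) - (-x') \<in> U1" "(-y) - (-y') \<in> U1" by (auto simp: algebra_simps)
    then have "- (g (-x) (-y) - g (-x') (-y')) \<in> W" using U1(2) by auto
    then show "h x y - h x' y' \<in> W" by (simp add: h algebra_simps)
  qed
qed



lemma po_trans_add: "po_vector_space le \<Longrightarrow> le x y \<Longrightarrow> le (x + z) (y + z)"
  unfolding po_vector_space_def by blast

lemma po_antisym: "po_vector_space le \<Longrightarrow> le x y \<Longrightarrow> le y x \<Longrightarrow> x = y"
  unfolding po_vector_space_def by blast

lemma po_trans_add_iff: "po_vector_space le \<Longrightarrow> le (x + z) (y + z) \<longleftrightarrow> le x y"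
  using po_trans_add[of le x y z] po_trans_add[of le "x+z" "y+z" "-z"] by auto

lemma po_neg: "po_vector_space le \<Longrightarrow> le x y \<Longrightarrow> le (-y) (-x)"
  using po_trans_add[of le x y "-x-y"] by (simp add: algebra_simps)

lemma msup_prop:
  assumes "mixed_lattice_vector_space le sle"
  shows "sle x (msup le sle x y) \<and> le y (msup le sle x y) \<and>
         (\<forall>v. sle x v \<and> le y v \<longrightarrow> le (msup le sle x y) v)"
proof -
  have po: "po_vector_space le" using assms by (simp add: mixed_lattice_vector_space_def)
  obtain w where w: "sle x w \<and> le y w \<and> (\<forall>v. sle x v \<and> le y v \<longrightarrow> le w v)"
    using assms unfolding mixed_lattice_vector_space_def by blast
  have "msup le sle x y = w" unfolding msup_def
    by (rule the_equality) (use w po_antisym[OF po] in blast)+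
  then show ?thesis using w by simp
qed

lemma msup_eq:
  assumes "mixed_lattice_vector_space le sle"
    and "sle x w" "le y w" "\<And>v. sle x v \<Longrightarrow> le y v \<Longrightarrow> le w v"
  shows "msup le sle x y = w"
proof -
  have po: "po_vector_space le" using assms by (simp add: mixed_lattice_vector_space_def)
  show ?thesis using msup_prop[OF assms(1), of x y] assms po_antisym[OF po] by blast
qed

lemma msup_transl:
  assumes M: "mixed_lattice_vector_space le sle"
  shows "msup le sle (x + z) (y + z) = msup le sle x y + z"
proof -
  have po: "po_vector_space le" "po_vector_space sle" using M by (simp_all add: mixed_lattice_vector_space_def)
  note P = msup_prop[OF M, of x y]
  show ?thesis
  proof (rule msup_eq[OF M])
    show "sle (x + z) (msup le sle x y + z)" using P po_trans_add[OF po(2)] by blast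
    show "le (y + z) (msup le sle x y + z)" using P po_trans_add[OF po(1)] by blast
    fix v assume "sle (x + z) v" "le (y + z) v"
    then have "sle x (v - z)" "le y (v - z)"
      using po_trans_add_iff[OF po(2), of x z "v - z"] po_trans_add_iff[OF po(1), of y z "v - z"] by auto
    then have "le (msup le sle x y) (v - z)" using P by blast
    then show "le (msup le sle x y + z) v"
      using po_trans_add_iff[OF po(1), of "msup le sle x y" z "v - z"] by simp
  qed
qed

lemma msup_shift:
  assumes M: "mixed_lattice_vector_space le sle"
  shows "msup le sle x y = msup le sle (x - y) 0 + y"
  using msup_transl[OF M, of "x - y" y 0] by simp

lemma minf_neg:
  assumes M: "mixed_lattice_vector_space le sle"
  shows "minf le sle x y = - msup le sle (-x) (-y)"
proof -
  have po: "po_vector_space le" "po_vector_space sle" using M by (simp_all add: mixed_lattice_vector_space_def)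
  note P = msup_prop[OF M, of "-x" "-y"]
  let ?w = "- msup le sle (-x) (-y)"
  have w: "sle ?w x \<and> le ?w y \<and> (\<forall>v. sle v x \<and> le v y \<longrightarrow> le v ?w)"
  proof (intro conjI allI impI)
    show "sle ?w x" using P po_neg[OF po(2), of "-x" "msup le sle (-x) (-y)"] by simp
    show "le ?w y" using P po_neg[OF po(1), of "-y" "msup le sle (-x) (-y)"] by simp
    fix v assume "sle v x \<and> le v y"
    then have "sle (-x) (-v)" "le (-y) (-v)" using po_neg po by blast+
    then have "le (msup le sle (-x) (-y)) (-v)" using P by blast
    then show "le v ?w" using po_neg[OF po(1)] by fastforce
  qed
  show ?thesis unfolding minf_def
    by (rule the_equality) (use w po_antisym[OF po(1)] in blast)+
qed


theorem proposition3p3: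
  fixes le sle :: "'a::real_vector \<Rightarrow> 'a \<Rightarrow> bool" and T :: "'a topology"
  assumes "mixed_lattice_vector_space le sle"
    and "vector_topology T"
  defines "sup' \<equiv> msup le sle" and "inf' \<equiv> minf le sle"
  shows
   "(unif_cont2 T sup' \<longleftrightarrow> unif_cont2 T inf') \<and>
    (unif_cont2 T inf' \<longleftrightarrow> unif_cont1 T (\<lambda>x. sup' x 0)) \<and>
    (unif_cont1 T (\<lambda>x. sup' x 0) \<longleftrightarrow> unif_cont1 T (\<lambda>x. sup' (- x) 0)) \<and>
    (unif_cont1 T (\<lambda>x. sup' (- x) 0) \<longleftrightarrow> unif_cont1 T (\<lambda>x. sup' (- x) x)) \<and>
    (unif_cont1 T (\<lambda>x. sup' (- x) x) \<longleftrightarrow> unif_cont1 T (\<lambda>x. sup' x (- x))) \<and>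
    (unif_cont1 T (\<lambda>x. sup' x (- x)) \<longleftrightarrow> unif_cont1 T (\<lambda>x. sup' 0 (- x))) \<and>
    (unif_cont1 T (\<lambda>x. sup' 0 (- x)) \<longleftrightarrow> unif_cont1 T (\<lambda>x. sup' 0 x))"
proof -
  note M = assms(1) and VT = assms(2)
  have tr: "\<And>x y z. sup' (x + z) (y + z) = sup' x y + z"
    unfolding sup'_def by (rule msup_transl[OF M])
  have half: "\<And>z::'a. (1/2) *\<^sub>R z + (1/2) *\<^sub>R z = z"
    by (simp flip: scaleR_add_left)
  have A_C: "unif_cont2 T sup' \<longleftrightarrow> unif_cont1 T (\<lambda>x. sup' x 0)"
  proof
    assume "unif_cont2 T sup'"
    then show "unif_cont1 T (\<lambda>x. sup' x 0)" by (rule uc2_to_uc1[OF VT, where a=1 and b=0]) simp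
  next
    assume "unif_cont1 T (\<lambda>x. sup' x 0)"
    then show "unif_cont2 T sup'"
      by (rule uc1_to_uc2[OF VT]) (simp only: sup'_def, rule msup_shift[OF M])
  qed
  have A_B: "unif_cont2 T sup' \<longleftrightarrow> unif_cont2 T inf'"
  proof
    assume "unif_cont2 T sup'"
    then show "unif_cont2 T inf'"
      by (rule uc2_neg[OF VT]) (simp add: sup'_def inf'_def minf_neg[OF M])
  next
    assume "unif_cont2 T inf'"
    then show "unif_cont2 T sup'"
      by (rule uc2_neg[OF VT]) (simp add: sup'_def inf'_def minf_neg[OF M])
  qed
  have D: "unif_cont2 T sup' \<longleftrightarrow> unif_cont1 T (\<lambda>x. sup' (- x) 0)"
  proof
    assume "unif_cont2 T sup'"
    then show "unif_cont1 T (\<lambda>x. sup' (- x) 0)" by (rule uc2_to_uc1[OF VT, where a="-1" and b=0]) simp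
  next
    assume "unif_cont1 T (\<lambda>x. sup' (- x) 0)"
    then have "unif_cont1 T (\<lambda>x. sup' x 0)" by (rule uc1_transfer[OF VT, where c="-1" and d=0]) simp
    then show "unif_cont2 T sup'" using A_C by blast
  qed
  have E: "unif_cont2 T sup' \<longleftrightarrow> unif_cont1 T (\<lambda>x. sup' (- x) x)"
  proof
    assume "unif_cont2 T sup'"
    then show "unif_cont1 T (\<lambda>x. sup' (- x) x)" by (rule uc2_to_uc1[OF VT, where a="-1" and b=1]) simp
  next
    assume "unif_cont1 T (\<lambda>x. sup' (- x) x)"
    then have "unif_cont1 T (\<lambda>x. sup' x 0)"
    proof (rule uc1_transfer[OF VT, where c="-1/2" and d="1/2"])
      fix z :: 'a
      have "sup' ((1/2) *\<^sub>R z + (1/2) *\<^sub>R z) (- ((1/2) *\<^sub>R z) + (1/2) *\<^sub>R z)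
          = sup' ((1/2) *\<^sub>R z) (- ((1/2) *\<^sub>R z)) + (1/2) *\<^sub>R z" by (rule tr)
      then show "sup' z 0 = sup' (- ((-1/2) *\<^sub>R z)) ((-1/2) *\<^sub>R z) + (1/2) *\<^sub>R z"
        using half by simp
    qed
    then show "unif_cont2 T sup'" using A_C by blast
  qed
  have F: "unif_cont2 T sup' \<longleftrightarrow> unif_cont1 T (\<lambda>x. sup' x (- x))"
  proof
    assume "unif_cont2 T sup'"
    then show "unif_cont1 T (\<lambda>x. sup' x (- x))" by (rule uc2_to_uc1[OF VT, where a=1 and b="-1"]) simp
  next
    assume "unif_cont1 T (\<lambda>x. sup' x (- x))"
    then have "unif_cont1 T (\<lambda>x. sup' x 0)"
    proof (rule uc1_transfer[OF VT, where c="1/2" and d="1/2"])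
      fix z :: 'a
      have "sup' ((1/2) *\<^sub>R z + (1/2) *\<^sub>R z) (- ((1/2) *\<^sub>R z) + (1/2) *\<^sub>R z)
          = sup' ((1/2) *\<^sub>R z) (- ((1/2) *\<^sub>R z)) + (1/2) *\<^sub>R z" by (rule tr)
      then show "sup' z 0 = sup' ((1/2) *\<^sub>R z) (- ((1/2) *\<^sub>R z)) + (1/2) *\<^sub>R z"
        using half by simp
    qed
    then show "unif_cont2 T sup'" using A_C by blast
  qed
  have G: "unif_cont2 T sup' \<longleftrightarrow> unif_cont1 T (\<lambda>x. sup' 0 (- x))"
  proof
    assume "unif_cont2 T sup'"
    then show "unif_cont1 T (\<lambda>x. sup' 0 (- x))" by (rule uc2_to_uc1[OF VT, where a=0 and b="-1"]) simp
  next
    assume "unif_cont1 T (\<lambda>x. sup' 0 (- x))"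
    then have "unif_cont1 T (\<lambda>x. sup' x 0)"
    proof (rule uc1_transfer[OF VT, where c="1" and d="1"])
      fix z :: 'a
      have "sup' (0 + z) (- z + z) = sup' 0 (- z) + z" by (rule tr)
      then show "sup' z 0 = sup' 0 (- (1 *\<^sub>R z)) + 1 *\<^sub>R z" by simp
    qed
    then show "unif_cont2 T sup'" using A_C by blast
  qed
  have H: "unif_cont2 T sup' \<longleftrightarrow> unif_cont1 T (\<lambda>x. sup' 0 x)"
  proof
    assume "unif_cont2 T sup'"
    then show "unif_cont1 T (\<lambda>x. sup' 0 x)" by (rule uc2_to_uc1[OF VT, where a=0 and b="1"]) simp
  next
    assume "unif_cont1 T (\<lambda>x. sup' 0 x)"
    then have "unif_cont1 T (\<lambda>x. sup' x 0)"
    proof (rule uc1_transfer[OF VT, where c="-1" and d="1"])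
      fix z :: 'a
      have "sup' (0 + z) (- z + z) = sup' 0 (- z) + z" by (rule tr)
      then show "sup' z 0 = sup' 0 ((-1) *\<^sub>R z) + 1 *\<^sub>R z" by simp
    qed
    then show "unif_cont2 T sup'" using A_C by blast
  qed
  show ?thesis using A_B A_C D E F G H by blast
qed

end
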